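(* Let $R$ be a commutative ring with identity. Then $R$ is almost complemented and roughly reduced if and only if $R$ is roughly complemented.
   Context: $\mathfrak{N}(R)$ is the nilradical, $\mathrm{reg}(R)$ the regular elements, $\mathrm{areg}(R)=\{x: x+\mathfrak{N}(R)\in\mathrm{reg}(R/\mathfrak{N}(R))\}$ (equivalently $xa\in\mathfrak{N}(R)\Rightarrow a\in\mathfrak{N}(R)$). $R$ is almost complemented if $R/\mathfrak{N}(R)$ is complemented, i.e. for each $\bar a$ there is $\bar b$ with $\bar a\bar b=0$ and $\bar a+\bar b$ regular in $R/\mathfrak{N}(R)$. Let $\eta(R)=\bigcup_{s\in\mathrm{areg}(R)}\mathrm{Ann}(s)$; $R$ is roughly reduced if $\eta(R)=\mathfrak{N}(R)$. An element $a$ is roughly complemented if there is $b$ with $ab=0$ and $a+b\in\mathrm{areg}(R)$; $R$ is roughly complemented if every element is. *)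

theory Defs
  imports Main
begin

definition nilradical :: "'a::comm_ring_1 set" where
  "nilradical = {x. \<exists>n::nat. x ^ n = 0}"

definition regular_el :: "'a::comm_ring_1 \<Rightarrow> bool" where
  "regular_el x \<longleftrightarrow> (\<forall>a. x * a = 0 \<longrightarrow> a = 0)"

definition Ann :: "'a::comm_ring_1 \<Rightarrow> 'a set" where
  "Ann s = {a. s * a = 0}"

text \<open>areg(R): x + N(R) is regular in R/N(R), i.e. x a in N(R) implies a in N(R).\<close>
definition areg :: "'a::comm_ring_1 set" where
  "areg = {x. \<forall>a. x * a \<in> nilradical \<longrightarrow> a \<in> nilradical}"

text \<open>R/N(R) complemented, written on representatives: for each a there is b with
  (a+N)(b+N) = 0, i.e. a b in N, and (a+N)+(b+N) regular in R/N, i.e. a+b in areg.\<close>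
definition almost_complemented :: "'a::comm_ring_1 itself \<Rightarrow> bool" where
  "almost_complemented (T::'a itself) \<longleftrightarrow>
     (\<forall>a::'a. \<exists>b. a * b \<in> nilradical \<and> a + b \<in> areg)"

definition eta :: "'a::comm_ring_1 set" where
  "eta = (\<Union>s\<in>areg. Ann s)"

definition roughly_reduced :: "'a::comm_ring_1 itself \<Rightarrow> bool" where
  "roughly_reduced (T::'a itself) \<longleftrightarrow> (eta :: 'a set) = nilradical"

definition roughly_complemented_el :: "'a::comm_ring_1 \<Rightarrow> bool" where
  "roughly_complemented_el a \<longleftrightarrow> (\<exists>b. a * b = 0 \<and> a + b \<in> areg)"

definition roughly_complemented :: "'a::comm_ring_1 itself \<Rightarrow> bool" where
  "roughly_complemented (T::'a itself) \<longleftrightarrow> (\<forall>a::'a. roughly_complemented_el a)"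

end

theory Submission
  imports Defs
begin

lemma nil_add:
  fixes x y :: "'a::comm_ring_1"
  assumes "x \<in> nilradical" "y \<in> nilradical"
  shows "x + y \<in> nilradical"
proof -
  obtain m where m: "x ^ m = 0" using assms(1) by (auto simp: nilradical_def)
  obtain n where n: "y ^ n = 0" using assms(2) by (auto simp: nilradical_def)
  have "(x + y) ^ (m + n) = (\<Sum>k\<le>m+n. of_nat ((m+n) choose k) * x^k * y^(m+n-k))"
    by (rule binomial_ring)
  also have "\<dots> = 0"
  proof (rule sum.neutral, intro ballI)
    fix k assume "k \<in> {..m+n}"
    show "of_nat ((m+n) choose k) * x^k * y^(m+n-k) = 0"
    proof (cases "k \<ge> m")
      case True
      then have "x^k = x^m * x^(k-m)" by (simp add: power_add[symmetric])
      then show ?thesis using m by simp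
    next
      case False
      then have "m+n-k = n + (m-k)" by simp
      then have "y^(m+n-k) = y^n * y^(m-k)" by (simp only: power_add)
      then show ?thesis using n by simp
    qed
  qed
  finally show ?thesis by (auto simp: nilradical_def)
qed

lemma nil_mult:
  fixes x y :: "'a::comm_ring_1"
  assumes "x \<in> nilradical"
  shows "y * x \<in> nilradical" "x * y \<in> nilradical"
proof -
  obtain m where m: "x ^ m = 0" using assms(1) by (auto simp: nilradical_def)
  have "(y*x)^m = 0" by (simp add: power_mult_distrib m)
  then show "y * x \<in> nilradical" "x * y \<in> nilradical" by (auto simp: nilradical_def mult.commute)
qed

lemma nil_uminus:
  fixes x :: "'a::comm_ring_1"
  assumes "x \<in> nilradical"
  shows "- x \<in> nilradical"
  using nil_mult(1)[OF assms, of "-1"] by simp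

lemma nil_diff:
  fixes x y :: "'a::comm_ring_1"
  assumes "x \<in> nilradical" "y \<in> nilradical"
  shows "x - y \<in> nilradical"
  using nil_add[OF assms(1) nil_uminus[OF assms(2)]] by simp

lemma nil_sq:
  fixes x :: "'a::comm_ring_1"
  assumes "x * x \<in> nilradical"
  shows "x \<in> nilradical"
proof -
  obtain m where m: "(x*x) ^ m = 0" using assms by (auto simp: nilradical_def)
  then have "x ^ (2*m) = 0" by (simp add: power_mult power2_eq_square)
  then show ?thesis by (auto simp: nilradical_def)
qed

lemma eta_sub: "(eta :: 'a::comm_ring_1 set) \<subseteq> nilradical"
proof
  fix x :: 'a assume "x \<in> eta"
  then obtain s where s: "s \<in> areg" "s * x = 0" by (auto simp: eta_def Ann_def)
  have "s * x \<in> nilradical" using s(2) by (auto simp: nilradical_def intro: exI[of _ 1])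
  then show "x \<in> nilradical" using s(1) by (auto simp: areg_def)
qed

theorem mainTheorem16:
  shows "(almost_complemented TYPE('a::comm_ring_1) \<and> roughly_reduced TYPE('a))
         \<longleftrightarrow> roughly_complemented TYPE('a)"
proof
  assume H: "almost_complemented TYPE('a) \<and> roughly_reduced TYPE('a)"
  show "roughly_complemented TYPE('a)"
    unfolding roughly_complemented_def roughly_complemented_el_def
  proof
    fix a :: 'a
    obtain b where b: "a * b \<in> nilradical" "a + b \<in> areg"
      using H by (auto simp: almost_complemented_def)
    have "a * b \<in> (eta :: 'a set)" using H b(1) by (auto simp: roughly_reduced_def)
    then obtain s where s: "s \<in> areg" "s * (a * b) = 0" by (auto simp: eta_def Ann_def)
    have "a * (s * b) = 0" using s(2) by (simp add: algebra_simps)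
    moreover have "a + s * b \<in> areg"
      unfolding areg_def
    proof (intro CollectI allI impI)
      fix c assume c: "(a + s * b) * c \<in> nilradical"
      have sab: "s * a * b = 0" using s(2) by (simp add: algebra_simps)
      have "a * ((a + s * b) * c) \<in> nilradical" using nil_mult(1)[OF c] .
      moreover have "a * ((a + s * b) * c) = a * a * c + (s * a * b) * c"
        by (simp add: algebra_simps)
      ultimately have "a * a * c \<in> nilradical" using sab by simp
      then have "c * (a * a * c) \<in> nilradical" by (rule nil_mult(1))
      then have "(a * c) * (a * c) \<in> nilradical" by (simp add: algebra_simps)
      then have ac: "a * c \<in> nilradical" by (rule nil_sq)
      have "b * ((a + s * b) * c) \<in> nilradical" using nil_mult(1)[OF c] .
      moreover have "(a * b) * c \<in> nilradical" using nil_mult(2)[OF b(1)] .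
      ultimately have "b * ((a + s * b) * c) - (a * b) * c \<in> nilradical" by (rule nil_diff)
      moreover have "b * ((a + s * b) * c) - (a * b) * c = s * (b * b * c)"
        by (simp add: algebra_simps)
      ultimately have "s * (b * b * c) \<in> nilradical" by simp
      then have "b * b * c \<in> nilradical" using s(1) by (auto simp: areg_def)
      then have "c * (b * b * c) \<in> nilradical" by (rule nil_mult(1))
      then have "(b * c) * (b * c) \<in> nilradical" by (simp add: algebra_simps)
      then have bc: "b * c \<in> nilradical" by (rule nil_sq)
      have "(a + b) * c = a * c + b * c" by (simp add: algebra_simps)
      then have "(a + b) * c \<in> nilradical" using nil_add[OF ac bc] by simp
      then show "c \<in> nilradical" using b(2) by (auto simp: areg_def)
    qed
    ultimately show "\<exists>b'. a * b' = 0 \<and> a + b' \<in> areg" by blast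
  qed
next
  assume H: "roughly_complemented TYPE('a)"
  show "almost_complemented TYPE('a) \<and> roughly_reduced TYPE('a)"
  proof
    show "almost_complemented TYPE('a)"
      unfolding almost_complemented_def
    proof
      fix a :: 'a
      obtain b where b: "a * b = 0" "a + b \<in> areg"
        using H by (auto simp: roughly_complemented_def roughly_complemented_el_def)
      have "a * b \<in> nilradical" unfolding nilradical_def using b(1) by (intro CollectI exI[of _ 1]) simp
      then show "\<exists>b. a * b \<in> nilradical \<and> a + b \<in> areg" using b(2) by blast
    qed
  next
    show "roughly_reduced TYPE('a)"
      unfolding roughly_reduced_def
    proof (rule antisym[OF eta_sub], rule subsetI)
      fix x :: 'a assume x: "x \<in> nilradical"
      obtain b where b: "x * b = 0" "x + b \<in> areg"
        using H by (auto simp: roughly_complemented_def roughly_complemented_el_def)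
      have "b \<in> areg" unfolding areg_def
      proof (intro CollectI allI impI)
        fix c assume c: "b * c \<in> nilradical"
        have "(x + b) * c = x * c + b * c" by (simp add: algebra_simps)
        then have "(x + b) * c \<in> nilradical" using nil_add[OF nil_mult(2)[OF x] c] by simp
        then show "c \<in> nilradical" using b(2) by (auto simp: areg_def)
      qed
      then show "x \<in> eta" using b(1) by (auto simp: eta_def Ann_def mult.commute)
    qed
  qed
qed

end
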